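(* Let $A\subseteq\mathbb R^n$ be nonempty with out-radius at most $1$, and let $r\ge 0$ be such that the Euclidean ball $B(0,r)$ has the same volume as the convex hull $\mathrm{conv}(A)$. Then $\mathrm{Vol}(A^c)\le \mathrm{Vol}(B(0,1-r))=(1-r)^n\kappa_n$.
   Context: For $x\in\mathbb R^n$, $B(x,\rho)$ denotes the closed Euclidean ball of radius $\rho$ centered at $x$, and $\kappa_n$ is the volume of the Euclidean unit ball. For $A\subseteq\mathbb R^n$, $A^c=\bigcap_{x\in A}B(x,1)$. The out-radius of $A$ is the radius of the smallest closed Euclidean ball containing $A$. *)

theory Defs
  imports "HOL-Analysis.Analysis"
begin

text \<open>The set A^c: intersection of all closed unit balls centred at points of A.\<close>
definition unit_ball_hull :: "'a::euclidean_space set \<Rightarrow> 'a set" where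
  "unit_ball_hull A = (\<Inter>x\<in>A. cball x 1)"

definition outradius :: "'a::euclidean_space set \<Rightarrow> real" where
  "outradius A = Inf {\<rho>. \<exists>x. A \<subseteq> cball x \<rho>}"

end

theory Submission
  imports Defs
begin

definition msum :: "'a::euclidean_space set \<Rightarrow> 'a set \<Rightarrow> 'a set" where
  "msum A B = {x + y | x y. x \<in> A \<and> y \<in> B}"

definition bfam :: "'a::euclidean_space set set \<Rightarrow> bool" where
  "bfam F \<longleftrightarrow> finite F \<and> (\<forall>X\<in>F. \<exists>a b. X = cbox a b) \<and>
     (\<forall>X\<in>F. \<forall>Y\<in>F. X \<noteq> Y \<longrightarrow> interior X \<inter> interior Y = {})"

definition nd :: "'a::euclidean_space set set \<Rightarrow> 'a set set" where
  "nd F = {X\<in>F. interior X \<noteq> {}}"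

lemma msum_commute: "msum A B = msum B A"
  unfolding msum_def by (auto; metis add.commute)

lemma msum_mono: "A \<subseteq> A' \<Longrightarrow> B \<subseteq> B' \<Longrightarrow> msum A B \<subseteq> msum A' B'"
  unfolding msum_def by blast

lemma compact_msum: "compact A \<Longrightarrow> compact B \<Longrightarrow> compact (msum A B)"
  unfolding msum_def using compact_sums by blast

lemma bfam_compact: "bfam F \<Longrightarrow> compact (\<Union>F)"
  unfolding bfam_def by (metis compact_Union compact_cbox)

lemma bfam_lmeasurable: "bfam F \<Longrightarrow> \<Union>F \<in> lmeasurable"
  by (simp add: bfam_compact lmeasurable_compact)

lemma cbox_inter_negligible:
  assumes "interior (cbox a b) \<inter> interior (cbox c d) = {}"
  shows "negligible (cbox a b \<inter> cbox c d)"
proof -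
  have "cbox a b \<inter> cbox c d \<subseteq> (cbox a b - box a b) \<union> (cbox c d - box c d)"
    using assms by auto
  then show ?thesis
    by (meson negligible_Un negligible_frontier_interval negligible_subset)
qed

lemma bfam_measure:
  assumes "bfam F"
  shows "measure lebesgue (\<Union>F) = (\<Sum>X\<in>F. measure lebesgue X)"
proof (rule measure_negligible_finite_Union)
  show "finite F" using assms by (simp add: bfam_def)
  show "\<And>S. S \<in> F \<Longrightarrow> S \<in> lmeasurable" using assms by (auto simp: bfam_def)
  show "pairwise (\<lambda>S T. negligible (S \<inter> T)) F"
    using assms unfolding bfam_def pairwise_def by (metis cbox_inter_negligible)
qed

lemma measure_cbox_interior_empty:
  "interior (cbox a b) = {} \<Longrightarrow> measure lebesgue (cbox a b) = 0"
  by (metis content_eq_0_interior measure_completion sets_lborel cbox_borel)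

lemma bfam_measure_nd:
  assumes "bfam F"
  shows "measure lebesgue (\<Union>F) = (\<Sum>X\<in>nd F. measure lebesgue X)"
proof -
  have "(\<Sum>X\<in>F. measure lebesgue X) = (\<Sum>X\<in>nd F. measure lebesgue X)"
  proof (rule sum.mono_neutral_right)
    show "finite F" using assms by (simp add: bfam_def)
    show "nd F \<subseteq> F" by (auto simp: nd_def)
    show "\<forall>i\<in>F - nd F. measure lebesgue i = 0"
      using assms by (auto simp: nd_def bfam_def intro: measure_cbox_interior_empty)
  qed
  then show ?thesis using bfam_measure[OF assms] by simp
qed

lemma negligible_interior_empty: "negligible S \<Longrightarrow> interior S = {}"
  by (metis interior_subset negligible_subset open_interior open_not_negligible)

lemma hyperplane_negligible:
  assumes "k \<in> Basis" shows "negligible {x. x \<bullet> k = c}"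
proof -
  have "{x. x \<bullet> k = c} = {x. k \<bullet> x = c}" by (auto simp: inner_commute)
  moreover have "k \<noteq> 0" using assms nonzero_Basis by blast
  ultimately show ?thesis using negligible_hyperplane[of k c] by simp
qed

lemma bfam_split:
  assumes "bfam F" "k \<in> Basis"
  shows "bfam ((\<lambda>X. X \<inter> {x. x \<bullet> k \<le> c}) ` F)" "bfam ((\<lambda>X. X \<inter> {x. x \<bullet> k \<ge> c}) ` F)"
proof -
  have fin: "finite F" and bx: "\<forall>X\<in>F. \<exists>a b. X = cbox a b"
    and dj: "\<forall>X\<in>F. \<forall>Y\<in>F. X \<noteq> Y \<longrightarrow> interior X \<inter> interior Y = {}"
    using assms(1) by (auto simp: bfam_def)
  have dj2: "interior (X \<inter> H) \<inter> interior (Y \<inter> H) = {}" if "X \<in> F" "Y \<in> F" "X \<inter> H \<noteq> Y \<inter> H" for X Y H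
  proof -
    have "X \<noteq> Y" using that by auto
    then have "interior X \<inter> interior Y = {}" using dj that by auto
    then show ?thesis by (metis (no_types, lifting) disjoint_iff_not_equal inf_le1 interior_mono subset_iff)
  qed
  have gen: "bfam ((\<lambda>X. X \<inter> H) ` F)" if Hs: "\<And>a b. \<exists>a' b'. cbox a b \<inter> H = cbox a' b'" for H
    unfolding bfam_def
  proof (intro conjI ballI impI)
    show "finite ((\<lambda>X. X \<inter> H) ` F)" using fin by simp
  next
    fix Z assume "Z \<in> (\<lambda>X. X \<inter> H) ` F"
    then obtain X where X: "X \<in> F" "Z = X \<inter> H" by blast
    then obtain a b where "X = cbox a b" using bx by blast
    then show "\<exists>a b. Z = cbox a b" using Hs X by blast
  next
    fix Z W assume "Z \<in> (\<lambda>X. X \<inter> H) ` F" "W \<in> (\<lambda>X. X \<inter> H) ` F" "Z \<noteq> W"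
    then show "interior Z \<inter> interior W = {}" using dj2 by blast
  qed
  show "bfam ((\<lambda>X. X \<inter> {x. x \<bullet> k \<le> c}) ` F)"
  proof (rule gen)
    fix a b show "\<exists>a' b'. cbox a b \<inter> {x. x \<bullet> k \<le> c} = cbox a' b'"
      using interval_split(1)[OF assms(2), of a b c] by blast
  qed
  show "bfam ((\<lambda>X. X \<inter> {x. x \<bullet> k \<ge> c}) ` F)"
  proof (rule gen)
    fix a b show "\<exists>a' b'. cbox a b \<inter> {x. x \<bullet> k \<ge> c} = cbox a' b'"
      using interval_split(2)[OF assms(2), of a b c] by blast
  qed
qed

lemma nd_img_subset:
  "nd ((\<lambda>X. X \<inter> H) ` F) \<subseteq> (\<lambda>X. X \<inter> H) ` {X \<in> nd F. interior (X \<inter> H) \<noteq> {}}"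
proof
  fix Z assume Z: "Z \<in> nd ((\<lambda>X. X \<inter> H) ` F)"
  then obtain X where X: "X \<in> F" "Z = X \<inter> H" unfolding nd_def by blast
  have iZ: "interior Z \<noteq> {}" using Z unfolding nd_def by blast
  have "interior Z \<subseteq> interior X" using X(2) by (simp add: interior_mono)
  then have "X \<in> nd F" using iZ X(1) unfolding nd_def by blast
  then show "Z \<in> (\<lambda>X. X \<inter> H) ` {X \<in> nd F. interior (X \<inter> H) \<noteq> {}}"
    using X iZ by blast
qed

lemma nd_img_le:
  assumes "finite F"
  shows "card (nd ((\<lambda>X. X \<inter> H) ` F)) \<le> card (nd F)"
proof -
  have fn: "finite (nd F)" using assms unfolding nd_def by simp
  have fs: "finite {X \<in> nd F. interior (X \<inter> H) \<noteq> {}}" using fn by simp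
  have "card (nd ((\<lambda>X. X \<inter> H) ` F)) \<le> card ((\<lambda>X. X \<inter> H) ` {X \<in> nd F. interior (X \<inter> H) \<noteq> {}})"
    by (rule card_mono[OF finite_imageI[OF fs] nd_img_subset])
  also have "\<dots> \<le> card {X \<in> nd F. interior (X \<inter> H) \<noteq> {}}"
    by (rule card_image_le[OF fs])
  also have "\<dots> \<le> card (nd F)"
    by (rule card_mono[OF fn]) blast
  finally show ?thesis .
qed

lemma nd_img_less:
  assumes "finite F" "Y \<in> nd F" "interior (Y \<inter> H) = {}"
  shows "card (nd ((\<lambda>X. X \<inter> H) ` F)) < card (nd F)"
proof -
  have fn: "finite (nd F)" using assms unfolding nd_def by simp
  have fs: "finite {X \<in> nd F. interior (X \<inter> H) \<noteq> {}}" using fn by simp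
  have "card (nd ((\<lambda>X. X \<inter> H) ` F)) \<le> card ((\<lambda>X. X \<inter> H) ` {X \<in> nd F. interior (X \<inter> H) \<noteq> {}})"
    by (rule card_mono[OF finite_imageI[OF fs] nd_img_subset])
  also have "\<dots> \<le> card {X \<in> nd F. interior (X \<inter> H) \<noteq> {}}"
    by (rule card_image_le[OF fs])
  also have "\<dots> < card (nd F)"
  proof (rule psubset_card_mono[OF fn])
    show "{X \<in> nd F. interior (X \<inter> H) \<noteq> {}} \<subset> nd F"
      using assms(2,3) by blast
  qed
  finally show ?thesis .
qed

lemma measure_cut:
  assumes "compact S" "k \<in> Basis"
  shows "measure lebesgue S = measure lebesgue (S \<inter> {x. x \<bullet> k \<le> c}) + measure lebesgue (S \<inter> {x. x \<bullet> k \<ge> c})"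
proof -
  have c1: "compact (S \<inter> {x. x \<bullet> k \<le> c})" "compact (S \<inter> {x. x \<bullet> k \<ge> c})"
    using assms by (auto intro!: compact_Int_closed closed_halfspace_component_le closed_halfspace_component_ge)
  have "negligible ((S \<inter> {x. x \<bullet> k \<le> c}) \<inter> (S \<inter> {x. x \<bullet> k \<ge> c}))"
    by (rule negligible_subset[OF hyperplane_negligible[OF assms(2), of c]]) auto
  then have "measure lebesgue ((S \<inter> {x. x \<bullet> k \<le> c}) \<inter> (S \<inter> {x. x \<bullet> k \<ge> c})) = 0"
    using negligible_imp_measure0 by blast
  moreover have "S = (S \<inter> {x. x \<bullet> k \<le> c}) \<union> (S \<inter> {x. x \<bullet> k \<ge> c})" by auto
  ultimately show ?thesis
    using measure_Un3[OF lmeasurable_compact[OF c1(1)] lmeasurable_compact[OF c1(2)]] by simp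
qed

lemma measure_two_sides:
  assumes "compact A" "compact B" "k \<in> Basis" "A \<subseteq> {x. x \<bullet> k \<le> c}" "B \<subseteq> {x. x \<bullet> k \<ge> c}"
    "A \<union> B \<subseteq> M" "M \<in> lmeasurable"
  shows "measure lebesgue A + measure lebesgue B \<le> measure lebesgue M"
proof -
  have "negligible (A \<inter> B)"
    by (rule negligible_subset[OF hyperplane_negligible[OF assms(3), of c]]) (use assms in fastforce)
  then have "measure lebesgue (A \<inter> B) = 0"
    using negligible_imp_measure0 by blast
  then have "measure lebesgue (A \<union> B) = measure lebesgue A + measure lebesgue B"
    using measure_Un3[OF lmeasurable_compact[OF assms(1)] lmeasurable_compact[OF assms(2)]] by simp
  moreover have "measure lebesgue (A \<union> B) \<le> measure lebesgue M"
    by (rule measure_mono_fmeasurable) (use assms in \<open>auto intro!: fmeasurableD lmeasurable_compact compact_Un\<close>)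
  ultimately show ?thesis by simp
qed

lemma bm_alg:
  fixes n :: nat
  assumes n: "n > 0" and mP: "mP > 0" and mQ: "mQ > 0" and l: "0 < l" "l < 1"
    and M1: "M1 \<ge> 0" and M2: "M2 \<ge> 0" and M: "M1 + M2 \<le> M"
    and h1: "(l*mP) powr (1/n) + (l*mQ) powr (1/n) \<le> M1 powr (1/n)"
    and h2: "((1-l)*mP) powr (1/n) + ((1-l)*mQ) powr (1/n) \<le> M2 powr (1/n)"
  shows "mP powr (1/n) + mQ powr (1/n) \<le> M powr (1/n)"
proof -
  define S where "S = mP powr (1/n) + mQ powr (1/n)"
  have S0: "S > 0" using mP mQ by (simp add: S_def add_pos_pos)
  have key: "u * S powr n \<le> N" if u: "0 < u" and N: "N \<ge> 0"
      and h: "(u*mP) powr (1/n) + (u*mQ) powr (1/n) \<le> N powr (1/n)" for u N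
  proof -
    have "(u*mP) powr (1/n) + (u*mQ) powr (1/n) = u powr (1/n) * S"
      using u mP mQ by (simp add: S_def powr_mult distrib_left)
    with h have hh: "u powr (1/n) * S \<le> N powr (1/n)" by simp
    have "(u powr (1/n) * S) powr n \<le> (N powr (1/n)) powr n"
      using powr_mono2[OF _ _ hh] u S0 by simp
    moreover have "(u powr (1/n) * S) powr n = (u powr (1/n)) powr n * S powr n"
      using u S0 by (simp add: powr_mult)
    moreover have "(u powr (1/n)) powr n = u"
      using u n by (simp add: powr_powr)
    moreover have "(N powr (1/n)) powr n = N"
      using N n by (simp add: powr_powr)
    ultimately show ?thesis by simp
  qed
  have "l * S powr n \<le> M1" using key[OF l(1) M1 h1] .
  moreover have "(1-l) * S powr n \<le> M2" using key[of "1-l" M2] l M2 h2 by simp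
  ultimately have SM: "S powr n \<le> M" using M by (simp add: algebra_simps)
  have "(S powr n) powr (1/n) \<le> M powr (1/n)"
    using powr_mono2[OF _ _ SM] S0 by simp
  moreover have "(S powr n) powr (1/n) = S" using S0 n by (simp add: powr_powr)
  ultimately show ?thesis by (simp add: S_def)
qed

lemma measure_cbox_max:
  "measure lebesgue (cbox l u) = (\<Prod>b\<in>Basis. max 0 ((u - l) \<bullet> b))"
proof -
  have "measure lebesgue (cbox l u) = measure lborel (cbox l u)"
    by (simp add: measure_completion)
  also have "\<dots> = (if \<forall>b\<in>Basis. l \<bullet> b \<le> u \<bullet> b then \<Prod>b\<in>Basis. (u - l) \<bullet> b else 0)"
    by (rule measure_lborel_cbox_eq)
  also have "\<dots> = (\<Prod>b\<in>Basis. max 0 ((u - l) \<bullet> b))"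
  proof (cases "\<forall>b\<in>Basis. l \<bullet> b \<le> u \<bullet> b")
    case True
    then show ?thesis by (auto intro!: prod.cong simp: inner_diff_left)
  next
    case False
    then obtain b where b: "b \<in> Basis" "u \<bullet> b < l \<bullet> b" by (auto simp: not_le)
    then have z: "(\<Prod>b\<in>Basis. max 0 ((u - l) \<bullet> b)) = 0"
      by (intro prod_zero) (auto simp: inner_diff_left intro!: bexI[of _ b])
    have "(if \<forall>b\<in>Basis. l \<bullet> b \<le> u \<bullet> b then \<Prod>b\<in>Basis. (u - l) \<bullet> b else 0) = 0"
      using False by (rule if_not_P)
    then show ?thesis using z by linarith
  qed
  finally show ?thesis .
qed

lemma inner_sum_Basis_gen: "i \<in> Basis \<Longrightarrow> (\<Sum>j\<in>Basis. f j *\<^sub>R j) \<bullet> i = (f i::real)"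
  by (simp add: inner_sum_left inner_Basis mult.commute[of "f _"] if_distrib[of "\<lambda>x. x * _"] sum.delta cong: if_cong)

lemma isCont_cut_cbox:
  assumes "k \<in> Basis"
  shows "isCont (\<lambda>t. measure lebesgue (cbox a b \<inter> {x. x \<bullet> k \<ge> t})) s"
proof -
  have eq: "measure lebesgue (cbox a b \<inter> {x. x \<bullet> k \<ge> t}) =
     (\<Prod>i\<in>Basis. max 0 (b \<bullet> i - (if i = k then max (a \<bullet> k) t else a \<bullet> i)))" for t
    unfolding interval_split(2)[OF assms] measure_cbox_max
    by (intro prod.cong refl) (simp add: inner_diff_left inner_sum_Basis_gen)
  have ci: "isCont (\<lambda>x. if i = k then max (a \<bullet> k) x else a \<bullet> i) s" for i
    by (cases "i = k") (auto intro!: continuous_intros)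
  show ?thesis
    unfolding eq
    by (intro continuous_prod) (auto intro!: continuous_intros ci)
qed

lemma cut_measure_sum:
  assumes "bfam Q" "closed H"
  shows "measure lebesgue (\<Union>Q \<inter> H) = (\<Sum>X\<in>Q. measure lebesgue (X \<inter> H))"
proof -
  have "\<Union>Q \<inter> H = \<Union>((\<lambda>X. X \<inter> H) ` Q)" by blast
  also have "measure lebesgue \<dots> = (\<Sum>X\<in>Q. measure lebesgue (X \<inter> H))"
  proof (rule measure_negligible_finite_Union_image)
    show "finite Q" using assms by (simp add: bfam_def)
    show "X \<inter> H \<in> lmeasurable" if "X \<in> Q" for X
      using assms that \<open>closed H\<close> unfolding bfam_def
      by (metis compact_Int_closed compact_cbox lmeasurable_compact)
    show "pairwise (\<lambda>X Y. negligible (X \<inter> H \<inter> (Y \<inter> H))) Q"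
      unfolding pairwise_def
    proof (intro ballI impI)
      fix X Y assume "X \<in> Q" "Y \<in> Q" "X \<noteq> Y"
      then have "negligible (X \<inter> Y)"
        using assms unfolding bfam_def by (metis cbox_inter_negligible)
      then show "negligible (X \<inter> H \<inter> (Y \<inter> H))"
        by (rule negligible_subset) blast
    qed
  qed
  finally show ?thesis .
qed

lemma isCont_cut:
  assumes "bfam Q" "k \<in> Basis"
  shows "isCont (\<lambda>t. measure lebesgue (\<Union>Q \<inter> {x. x \<bullet> k \<ge> t})) s"
proof -
  have eq: "(\<lambda>t. measure lebesgue (\<Union>Q \<inter> {x. x \<bullet> k \<ge> t})) =
      (\<lambda>t. \<Sum>X\<in>Q. measure lebesgue (X \<inter> {x. x \<bullet> k \<ge> t}))"
  proof (rule ext)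
    fix t show "measure lebesgue (\<Union>Q \<inter> {x. x \<bullet> k \<ge> t}) = (\<Sum>X\<in>Q. measure lebesgue (X \<inter> {x. x \<bullet> k \<ge> t}))"
      by (rule cut_measure_sum[OF assms(1) closed_halfspace_component_ge])
  qed
  have "\<forall>X\<in>Q. isCont (\<lambda>t. measure lebesgue (X \<inter> {x. x \<bullet> k \<ge> t})) s"
  proof
    fix X assume "X \<in> Q"
    have "\<forall>X\<in>Q. \<exists>a b. X = cbox a b" using assms(1) unfolding bfam_def by (elim conjE)
    then obtain a b where X: "X = cbox a b" using \<open>X \<in> Q\<close> by (elim ballE exE) auto
    show "isCont (\<lambda>t. measure lebesgue (X \<inter> {x. x \<bullet> k \<ge> t})) s"
      unfolding X by (rule isCont_cut_cbox[OF assms(2)])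
  qed
  then show ?thesis unfolding eq by (rule isCont_sum)
qed

lemma cut_ivt:
  assumes "bfam Q" "k \<in> Basis" "0 \<le> y" "y \<le> measure lebesgue (\<Union>Q)"
  obtains t where "measure lebesgue (\<Union>Q \<inter> {x. x \<bullet> k \<ge> t}) = y"
proof -
  let ?g = "\<lambda>t. measure lebesgue (\<Union>Q \<inter> {x. x \<bullet> k \<ge> t})"
  have "bounded (\<Union>Q)" using bfam_compact[OF assms(1)] compact_imp_bounded by blast
  then obtain R where R: "R > 0" "\<And>x. x \<in> \<Union>Q \<Longrightarrow> norm x \<le> R" by (auto simp: bounded_pos)
  have xk: "\<bar>x \<bullet> k\<bar> \<le> R" if "x \<in> \<Union>Q" for x
    using Basis_le_norm[OF assms(2), of x] R(2)[OF that] by linarith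
  have "\<Union>Q \<subseteq> {x. x \<bullet> k \<ge> -R}"
  proof
    fix x assume "x \<in> \<Union>Q" then have "\<bar>x \<bullet> k\<bar> \<le> R" by (rule xk)
    then show "x \<in> {x. x \<bullet> k \<ge> -R}" by simp
  qed
  then have "\<Union>Q \<inter> {x. x \<bullet> k \<ge> -R} = \<Union>Q" by blast
  then have glo: "?g (-R) = measure lebesgue (\<Union>Q)" by simp
  have "negligible (\<Union>Q \<inter> {x. x \<bullet> k \<ge> R})"
  proof (rule negligible_subset[OF hyperplane_negligible[OF assms(2), of R]])
    show "\<Union>Q \<inter> {x. x \<bullet> k \<ge> R} \<subseteq> {x. x \<bullet> k = R}"
    proof
      fix x assume x: "x \<in> \<Union>Q \<inter> {x. x \<bullet> k \<ge> R}"
      then have a: "\<bar>x \<bullet> k\<bar> \<le> R" using xk by blast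
      have b: "R \<le> x \<bullet> k" using x by blast
      show "x \<in> {x. x \<bullet> k = R}" using a b by (simp add: abs_le_iff)
    qed
  qed
  then have ghi: "?g R = 0" using negligible_imp_measure0 by blast
  have "\<exists>t. -R \<le> t \<and> t \<le> R \<and> ?g t = y"
  proof (rule IVT2)
    show "?g R \<le> y" using ghi assms(3) by simp
    show "y \<le> ?g (-R)" using glo assms(4) by simp
    show "-R \<le> R" using R by simp
    show "\<forall>x. -R \<le> x \<and> x \<le> R \<longrightarrow> isCont ?g x" using isCont_cut[OF assms(1,2)] by blast
  qed
  then obtain t where "?g t = y" by (elim exE conjE)
  then show ?thesis by (rule that)
qed

lemma bfamD:
  assumes "bfam F"
  shows "finite F" "X \<in> F \<Longrightarrow> \<exists>a b. X = cbox a b"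
    "X \<in> F \<Longrightarrow> Y \<in> F \<Longrightarrow> X \<noteq> Y \<Longrightarrow> interior X \<inter> interior Y = {}"
  using assms unfolding bfam_def by simp_all

lemma cbox_sum_subset:
  fixes a b c d :: "'a::euclidean_space"
  assumes ab: "\<forall>i\<in>Basis. a \<bullet> i < b \<bullet> i" and cd: "\<forall>i\<in>Basis. c \<bullet> i < d \<bullet> i"
  shows "cbox (a + c) (b + d) \<subseteq> msum (cbox a b) (cbox c d)"
proof
  fix z assume z: "z \<in> cbox (a + c) (b + d)"
  define s where "s i = (z \<bullet> i - a \<bullet> i - c \<bullet> i) / ((b \<bullet> i - a \<bullet> i) + (d \<bullet> i - c \<bullet> i))" for i
  define x where "x = (\<Sum>i\<in>Basis. (a \<bullet> i + s i * (b \<bullet> i - a \<bullet> i)) *\<^sub>R i)"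
  have xi: "x \<bullet> i = a \<bullet> i + s i * (b \<bullet> i - a \<bullet> i)" if "i \<in> Basis" for i
    unfolding x_def using that by (rule inner_sum_Basis_gen)
  have s01: "0 \<le> s i \<and> s i \<le> 1" if i: "i \<in> Basis" for i
  proof -
    have pos: "(b \<bullet> i - a \<bullet> i) + (d \<bullet> i - c \<bullet> i) > 0" using ab cd i by force
    have "(a + c) \<bullet> i \<le> z \<bullet> i" "z \<bullet> i \<le> (b + d) \<bullet> i" using z i by (auto simp: mem_box)
    then have "a \<bullet> i + c \<bullet> i \<le> z \<bullet> i" "z \<bullet> i \<le> b \<bullet> i + d \<bullet> i" by (simp_all add: inner_add_left)
    then show ?thesis using pos unfolding s_def by (simp add: divide_simps)
  qed
  have seq: "s i * ((b \<bullet> i - a \<bullet> i) + (d \<bullet> i - c \<bullet> i)) = z \<bullet> i - a \<bullet> i - c \<bullet> i" if i: "i \<in> Basis" for i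
  proof -
    have pos: "(b \<bullet> i - a \<bullet> i) + (d \<bullet> i - c \<bullet> i) > 0" using ab cd i by force
    then show ?thesis unfolding s_def by simp
  qed
  have "x \<in> cbox a b"
  proof (unfold mem_box, intro ballI conjI)
    fix i :: 'a assume i: "i \<in> Basis"
    have "a \<bullet> i < b \<bullet> i" using ab i by blast
    then have "s i * (b \<bullet> i - a \<bullet> i) \<le> b \<bullet> i - a \<bullet> i" "0 \<le> s i * (b \<bullet> i - a \<bullet> i)"
      using s01[OF i] by (simp_all add: mult_left_le_one_le)
    then show "a \<bullet> i \<le> x \<bullet> i" "x \<bullet> i \<le> b \<bullet> i"
      using xi[OF i] by linarith+
  qed
  moreover have "z - x \<in> cbox c d"
  proof (unfold mem_box, intro ballI conjI)
    fix i :: 'a assume i: "i \<in> Basis"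
    have e: "(z - x) \<bullet> i = c \<bullet> i + s i * (d \<bullet> i - c \<bullet> i)"
      using xi[OF i] seq[OF i] by (simp add: inner_diff_left algebra_simps)
    have "c \<bullet> i < d \<bullet> i" using cd i by blast
    then have "s i * (d \<bullet> i - c \<bullet> i) \<le> d \<bullet> i - c \<bullet> i" "0 \<le> s i * (d \<bullet> i - c \<bullet> i)"
      using s01[OF i] by (simp_all add: mult_left_le_one_le)
    then show "c \<bullet> i \<le> (z - x) \<bullet> i" "(z - x) \<bullet> i \<le> d \<bullet> i"
      using e by linarith+
  qed
  ultimately show "z \<in> msum (cbox a b) (cbox c d)"
    unfolding msum_def by (intro CollectI exI[of _ x] exI[of _ "z - x"]) simp
qed

lemma measure_cbox_prod:
  assumes "\<forall>i\<in>Basis. a \<bullet> i \<le> b \<bullet> i"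
  shows "measure lebesgue (cbox a b) = (\<Prod>i\<in>Basis. b \<bullet> i - a \<bullet> i)"
  unfolding measure_cbox_max using assms by (intro prod.cong) (auto simp: inner_diff_left)

lemma box_bm:
  fixes a b c d :: "'a::euclidean_space"
  assumes ab: "\<forall>i\<in>Basis. a \<bullet> i < b \<bullet> i" and cd: "\<forall>i\<in>Basis. c \<bullet> i < d \<bullet> i"
  shows "measure lebesgue (cbox a b) powr (1/DIM('a)) + measure lebesgue (cbox c d) powr (1/DIM('a))
     \<le> measure lebesgue (cbox (a + c) (b + d)) powr (1/DIM('a))"
proof -
  define e where "e = 1 / real DIM('a)"
  define x where "x i = b \<bullet> i - a \<bullet> i" for i
  define y where "y i = d \<bullet> i - c \<bullet> i" for i
  have xp: "x i > 0" "y i > 0" if "i \<in> Basis" for i using ab cd that by (auto simp: x_def y_def)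
  have m1: "measure lebesgue (cbox a b) = (\<Prod>i\<in>Basis. x i)"
    using ab by (subst measure_cbox_prod) (auto simp: x_def less_imp_le)
  have m2: "measure lebesgue (cbox c d) = (\<Prod>i\<in>Basis. y i)"
    using cd by (subst measure_cbox_prod) (auto simp: y_def less_imp_le)
  have m3: "measure lebesgue (cbox (a + c) (b + d)) = (\<Prod>i\<in>Basis. x i + y i)"
  proof -
    have le3: "\<forall>i\<in>Basis. (a + c) \<bullet> i \<le> (b + d) \<bullet> i"
      using ab cd by (simp add: inner_add_left add_mono less_imp_le)
    show ?thesis by (simp add: measure_cbox_prod[OF le3] x_def y_def inner_add_left algebra_simps)
  qed
  have ne: "x i + y i \<noteq> 0" if "i \<in> Basis" for i using xp[OF that] by linarith
  define P where "P = (\<Prod>i\<in>Basis. x i + y i)"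
  have P0: "P > 0" unfolding P_def using xp by (intro prod_pos) (simp add: add_pos_pos)
  have px: "(\<Prod>i\<in>Basis. x i) = (\<Prod>i\<in>Basis. x i / (x i + y i)) * P"
    unfolding P_def prod.distrib[symmetric] by (intro prod.cong refl) (simp add: ne)
  have py: "(\<Prod>i\<in>Basis. y i) = (\<Prod>i\<in>Basis. y i / (x i + y i)) * P"
    unfolding P_def prod.distrib[symmetric] by (intro prod.cong refl) (simp add: ne)
  have gx: "(\<Prod>i\<in>Basis. x i / (x i + y i)) powr e \<le> (\<Sum>i\<in>Basis. (x i / (x i + y i)) / DIM('a))"
    unfolding e_def using arith_geom_mean[of Basis "\<lambda>i. x i / (x i + y i)"] xp
    by (simp add: less_imp_le add_pos_pos)
  have gy: "(\<Prod>i\<in>Basis. y i / (x i + y i)) powr e \<le> (\<Sum>i\<in>Basis. (y i / (x i + y i)) / DIM('a))"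
    unfolding e_def using arith_geom_mean[of Basis "\<lambda>i. y i / (x i + y i)"] xp
    by (simp add: less_imp_le add_pos_pos)
  have "(\<Sum>i\<in>Basis. (x i / (x i + y i)) / DIM('a)) + (\<Sum>i\<in>Basis. (y i / (x i + y i)) / DIM('a))
      = (\<Sum>i\<in>(Basis::'a set). 1 / DIM('a))"
    unfolding sum.distrib[symmetric]
    by (rule sum.cong[OF refl]) (simp add: add_divide_distrib[symmetric] ne)
  also have "\<dots> = 1" by simp
  finally have s1: "(\<Prod>i\<in>Basis. x i / (x i + y i)) powr e + (\<Prod>i\<in>Basis. y i / (x i + y i)) powr e \<le> 1"
    using gx gy by linarith
  have nx: "(\<Prod>i\<in>Basis. x i / (x i + y i)) \<ge> 0" "(\<Prod>i\<in>Basis. y i / (x i + y i)) \<ge> 0"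
    using xp by (auto intro!: prod_nonneg simp: less_imp_le add_pos_pos)
  have "(\<Prod>i\<in>Basis. x i) powr e + (\<Prod>i\<in>Basis. y i) powr e
     = ((\<Prod>i\<in>Basis. x i / (x i + y i)) powr e + (\<Prod>i\<in>Basis. y i / (x i + y i)) powr e) * P powr e"
    unfolding px py using nx P0 by (simp add: powr_mult distrib_right)
  also have "\<dots> \<le> 1 * P powr e"
    using s1 by (intro mult_right_mono) auto
  finally show ?thesis unfolding m1 m2 m3 e_def P_def by simp
qed

definition BMp :: "'a::euclidean_space set \<Rightarrow> 'a set \<Rightarrow> bool" where
  "BMp A B \<longleftrightarrow> measure lebesgue A powr (1/DIM('a)) + measure lebesgue B powr (1/DIM('a))
     \<le> measure lebesgue (msum A B) powr (1/DIM('a))"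

lemma BMp_commute: "BMp A B \<longleftrightarrow> BMp B A"
  unfolding BMp_def by (simp add: msum_commute add.commute)

lemma nd_cbox:
  assumes "bfam F" "X \<in> nd F"
  obtains a b where "X = cbox a b" "\<forall>i\<in>Basis. a \<bullet> i < b \<bullet> i"
proof -
  have "X \<in> F" "interior X \<noteq> {}" using assms(2) unfolding nd_def by simp_all
  then obtain a b where X: "X = cbox a b" using bfamD(2)[OF assms(1)] by blast
  then have "box a b \<noteq> {}" using \<open>interior X \<noteq> {}\<close> by simp
  then have "\<forall>i\<in>Basis. a \<bullet> i < b \<bullet> i" by (simp add: box_ne_empty)
  then show ?thesis using X that by blast
qed

lemma nd_measure_pos:
  assumes "bfam F" "X \<in> nd F"
  shows "measure lebesgue X > 0"
proof -
  obtain a b where X: "X = cbox a b" "\<forall>i\<in>Basis. a \<bullet> i < b \<bullet> i" using nd_cbox[OF assms] by blast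
  have "measure lebesgue X = (\<Prod>i\<in>Basis. b \<bullet> i - a \<bullet> i)"
    unfolding X(1) using X(2) by (intro measure_cbox_prod) (simp add: less_imp_le)
  also have "\<dots> > 0" using X(2) by (intro prod_pos) simp
  finally show ?thesis .
qed

lemma nd_sep:
  assumes "bfam F" "X \<in> nd F" "Y \<in> nd F" "X \<noteq> Y"
  shows "\<exists>k\<in>Basis. \<exists>c. \<exists>X'\<in>nd F. \<exists>Y'\<in>nd F. X' \<subseteq> {x. x \<bullet> k \<le> c} \<and> Y' \<subseteq> {x. x \<bullet> k \<ge> c}"
proof -
  obtain a b where X: "X = cbox a b" "\<forall>i\<in>Basis. a \<bullet> i < b \<bullet> i" using nd_cbox[OF assms(1,2)] by blast
  obtain c d where Y: "Y = cbox c d" "\<forall>i\<in>Basis. c \<bullet> i < d \<bullet> i" using nd_cbox[OF assms(1,3)] by blast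
  have "X \<in> F" "Y \<in> F" using assms(2,3) unfolding nd_def by simp_all
  then have "interior X \<inter> interior Y = {}" using bfamD(3)[OF assms(1)] assms(4) by blast
  then have "box a b \<inter> box c d = {}" using X Y by simp
  then obtain i where i: "i \<in> Basis" "b \<bullet> i \<le> a \<bullet> i \<or> d \<bullet> i \<le> c \<bullet> i \<or> b \<bullet> i \<le> c \<bullet> i \<or> d \<bullet> i \<le> a \<bullet> i"
    using disjoint_interval(4)[of a b c d] by blast
  then have "b \<bullet> i \<le> c \<bullet> i \<or> d \<bullet> i \<le> a \<bullet> i" using X(2) Y(2) by force
  then show ?thesis
  proof
    assume h: "b \<bullet> i \<le> c \<bullet> i"
    have "X \<subseteq> {x. x \<bullet> i \<le> b \<bullet> i}" using X(1) i(1) by (auto simp: mem_box)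
    moreover have "Y \<subseteq> {x. x \<bullet> i \<ge> b \<bullet> i}" using Y(1) i(1) h by (force simp: mem_box)
    ultimately show ?thesis using i(1) assms(2,3) by blast
  next
    assume h: "d \<bullet> i \<le> a \<bullet> i"
    have "Y \<subseteq> {x. x \<bullet> i \<le> d \<bullet> i}" using Y(1) i(1) by (auto simp: mem_box)
    moreover have "X \<subseteq> {x. x \<bullet> i \<ge> d \<bullet> i}" using X(1) i(1) h by (force simp: mem_box)
    ultimately show ?thesis using i(1) assms(2,3) by blast
  qed
qed

lemma nd_nonempty:
  assumes "bfam F" "measure lebesgue (\<Union>F) > 0"
  shows "nd F \<noteq> {}"
  using assms bfam_measure_nd[OF assms(1)] by auto

lemma msum_halfspace:
  assumes "A \<subseteq> {x. x \<bullet> k \<le> c}" "B \<subseteq> {x. x \<bullet> k \<le> t}"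
  shows "msum A B \<subseteq> {x. x \<bullet> k \<le> c + t}"
proof
  fix z assume "z \<in> msum A B"
  then obtain x y where "z = x + y" "x \<in> A" "y \<in> B" unfolding msum_def by blast
  then show "z \<in> {x. x \<bullet> k \<le> c + t}" using assms by (auto simp: inner_add_left intro: add_mono)
qed

lemma msum_halfspace_ge:
  assumes "A \<subseteq> {x. x \<bullet> k \<ge> c}" "B \<subseteq> {x. x \<bullet> k \<ge> t}"
  shows "msum A B \<subseteq> {x. x \<bullet> k \<ge> c + t}"
proof
  fix z assume "z \<in> msum A B"
  then obtain x y where "z = x + y" "x \<in> A" "y \<in> B" unfolding msum_def by blast
  then show "z \<in> {x. x \<bullet> k \<ge> c + t}" using assms by (auto simp: inner_add_left intro: add_mono)
qed

lemma bm_step: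
  fixes P Q :: "'a::euclidean_space set set"
  assumes P: "bfam P" and Q: "bfam Q"
    and mP: "measure lebesgue (\<Union>P) > 0" and mQ: "measure lebesgue (\<Union>Q) > 0"
    and c2: "card (nd P) \<ge> 2"
    and IH: "\<And>P' Q' :: 'a set set. bfam P' \<Longrightarrow> bfam Q' \<Longrightarrow> measure lebesgue (\<Union>P') > 0 \<Longrightarrow> measure lebesgue (\<Union>Q') > 0
       \<Longrightarrow> card (nd P') + card (nd Q') < card (nd P) + card (nd Q) \<Longrightarrow> BMp (\<Union>P') (\<Union>Q')"
  shows "BMp (\<Union>P) (\<Union>Q)"
proof -
  have finP: "finite P" and finQ: "finite Q" using bfamD(1) P Q by auto
  have fnd: "finite (nd P)" using finP unfolding nd_def by simp
  obtain X where X: "X \<in> nd P" using c2 by fastforce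
  have "card (nd P - {X}) \<ge> 1" using c2 X fnd by simp
  then have "nd P - {X} \<noteq> {}" by (metis card.empty not_one_le_zero)
  then obtain Y where Y: "Y \<in> nd P" "Y \<noteq> X" by blast
  obtain k c X' Y' where k: "k \<in> Basis" and X': "X' \<in> nd P" and Y': "Y' \<in> nd P"
    and X'c: "X' \<subseteq> {x. x \<bullet> k \<le> c}" and Y'c: "Y' \<subseteq> {x. x \<bullet> k \<ge> c}"
    using nd_sep[OF P X Y(1)] Y(2) by metis
  define Pm where "Pm = (\<lambda>Z. Z \<inter> {x. x \<bullet> k \<le> c}) ` P"
  define Pp where "Pp = (\<lambda>Z. Z \<inter> {x. x \<bullet> k \<ge> c}) ` P"
  have bPm: "bfam Pm" and bPp: "bfam Pp" unfolding Pm_def Pp_def using bfam_split[OF P k] by auto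
  have uPm: "\<Union>Pm = \<Union>P \<inter> {x. x \<bullet> k \<le> c}" and uPp: "\<Union>Pp = \<Union>P \<inter> {x. x \<bullet> k \<ge> c}"
    unfolding Pm_def Pp_def by blast+
  define mp where "mp = measure lebesgue (\<Union>P)"
  define mq where "mq = measure lebesgue (\<Union>Q)"
  have split: "mp = measure lebesgue (\<Union>Pm) + measure lebesgue (\<Union>Pp)"
    unfolding mp_def uPm uPp by (rule measure_cut[OF bfam_compact[OF P] k])
  have "X' \<subseteq> \<Union>Pm" using X'c X' unfolding uPm nd_def by blast
  then have "measure lebesgue X' \<le> measure lebesgue (\<Union>Pm)"
    using X' P bPm unfolding nd_def
    by (intro measure_mono_fmeasurable) (auto intro: fmeasurableD bfam_lmeasurable dest: bfamD(2))
  then have pm_pos: "measure lebesgue (\<Union>Pm) > 0" using nd_measure_pos[OF P X'] by linarith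
  have "Y' \<subseteq> \<Union>Pp" using Y'c Y' unfolding uPp nd_def by blast
  then have "measure lebesgue Y' \<le> measure lebesgue (\<Union>Pp)"
    using Y' P bPp unfolding nd_def
    by (intro measure_mono_fmeasurable) (auto intro: fmeasurableD bfam_lmeasurable dest: bfamD(2))
  then have pp_pos: "measure lebesgue (\<Union>Pp) > 0" using nd_measure_pos[OF P Y'] by linarith
  define l where "l = measure lebesgue (\<Union>Pm) / mp"
  have mp_pos: "mp > 0" using mP unfolding mp_def .
  have mq_pos: "mq > 0" using mQ unfolding mq_def .
  have l01: "0 < l" "l < 1" unfolding l_def using split pm_pos pp_pos mp_pos by (simp_all add: field_simps)
  have Pm_eq: "measure lebesgue (\<Union>Pm) = l * mp" unfolding l_def using mp_pos by simp
  have Pp_eq: "measure lebesgue (\<Union>Pp) = (1 - l) * mp" using split Pm_eq by (simp add: algebra_simps)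
  obtain t where t: "measure lebesgue (\<Union>Q \<inter> {x. x \<bullet> k \<ge> t}) = (1 - l) * mq"
    using cut_ivt[OF Q k, of "(1 - l) * mq"] l01 mq_pos unfolding mq_def by auto
  define Qm where "Qm = (\<lambda>Z. Z \<inter> {x. x \<bullet> k \<le> t}) ` Q"
  define Qp where "Qp = (\<lambda>Z. Z \<inter> {x. x \<bullet> k \<ge> t}) ` Q"
  have bQm: "bfam Qm" and bQp: "bfam Qp" unfolding Qm_def Qp_def using bfam_split[OF Q k] by auto
  have uQm: "\<Union>Qm = \<Union>Q \<inter> {x. x \<bullet> k \<le> t}" and uQp: "\<Union>Qp = \<Union>Q \<inter> {x. x \<bullet> k \<ge> t}"
    unfolding Qm_def Qp_def by blast+
  have splitq: "mq = measure lebesgue (\<Union>Qm) + measure lebesgue (\<Union>Qp)"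
    unfolding mq_def uQm uQp by (rule measure_cut[OF bfam_compact[OF Q] k])
  have Qp_eq: "measure lebesgue (\<Union>Qp) = (1 - l) * mq" using t uQp by simp
  have Qm_eq: "measure lebesgue (\<Union>Qm) = l * mq" using splitq Qp_eq by (simp add: algebra_simps)
  have negm: "interior (Y' \<inter> {x. x \<bullet> k \<le> c}) = {}"
  proof (rule negligible_interior_empty)
    show "negligible (Y' \<inter> {x. x \<bullet> k \<le> c})"
      by (rule negligible_subset[OF hyperplane_negligible[OF k, of c]]) (use Y'c in force)
  qed
  have negp: "interior (X' \<inter> {x. x \<bullet> k \<ge> c}) = {}"
  proof (rule negligible_interior_empty)
    show "negligible (X' \<inter> {x. x \<bullet> k \<ge> c})"
      by (rule negligible_subset[OF hyperplane_negligible[OF k, of c]]) (use X'c in force)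
  qed
  have cPm: "card (nd Pm) < card (nd P)" unfolding Pm_def by (rule nd_img_less[OF finP Y' negm])
  have cPp: "card (nd Pp) < card (nd P)" unfolding Pp_def by (rule nd_img_less[OF finP X' negp])
  have cQm: "card (nd Qm) \<le> card (nd Q)" unfolding Qm_def by (rule nd_img_le[OF finQ])
  have cQp: "card (nd Qp) \<le> card (nd Q)" unfolding Qp_def by (rule nd_img_le[OF finQ])
  have BM1: "BMp (\<Union>Pm) (\<Union>Qm)"
    by (rule IH[OF bPm bQm pm_pos]) (use Qm_eq l01 mq_pos cPm cQm in auto)
  have BM2: "BMp (\<Union>Pp) (\<Union>Qp)"
    by (rule IH[OF bPp bQp pp_pos]) (use Qp_eq l01 mq_pos cPp cQp in auto)
  define M1 where "M1 = measure lebesgue (msum (\<Union>Pm) (\<Union>Qm))"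
  define M2 where "M2 = measure lebesgue (msum (\<Union>Pp) (\<Union>Qp))"
  define M where "M = measure lebesgue (msum (\<Union>P) (\<Union>Q))"
  have MM: "M1 + M2 \<le> M"
    unfolding M1_def M2_def M_def
  proof (rule measure_two_sides[OF _ _ k])
    show "compact (msum (\<Union>Pm) (\<Union>Qm))" "compact (msum (\<Union>Pp) (\<Union>Qp))"
      by (intro compact_msum bfam_compact bPm bQm bPp bQp)+
    show "msum (\<Union>Pm) (\<Union>Qm) \<subseteq> {x. x \<bullet> k \<le> c + t}"
      by (rule msum_halfspace) (auto simp: uPm uQm)
    show "msum (\<Union>Pp) (\<Union>Qp) \<subseteq> {x. x \<bullet> k \<ge> c + t}"
      by (rule msum_halfspace_ge) (auto simp: uPp uQp)
    show "msum (\<Union>Pm) (\<Union>Qm) \<union> msum (\<Union>Pp) (\<Union>Qp) \<subseteq> msum (\<Union>P) (\<Union>Q)"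
      unfolding uPm uQm uPp uQp by (intro Un_least msum_mono) auto
    show "msum (\<Union>P) (\<Union>Q) \<in> lmeasurable"
      by (intro lmeasurable_compact compact_msum bfam_compact P Q)
  qed
  have n0: "DIM('a) > 0" by simp
  show ?thesis
    unfolding BMp_def
  proof (rule bm_alg[OF n0 _ _ l01 _ _ MM[unfolded M1_def M2_def M_def]])
    show "measure lebesgue (\<Union>P) > 0" "measure lebesgue (\<Union>Q) > 0" using mP mQ .
    show "measure lebesgue (msum (\<Union>Pm) (\<Union>Qm)) \<ge> 0" "measure lebesgue (msum (\<Union>Pp) (\<Union>Qp)) \<ge> 0" by simp_all
    show "(l * measure lebesgue (\<Union>P)) powr (1 / DIM('a)) + (l * measure lebesgue (\<Union>Q)) powr (1 / DIM('a))
        \<le> measure lebesgue (msum (\<Union>Pm) (\<Union>Qm)) powr (1 / DIM('a))"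
      using BM1 unfolding BMp_def Pm_eq Qm_eq mp_def mq_def .
    show "((1 - l) * measure lebesgue (\<Union>P)) powr (1 / DIM('a)) + ((1 - l) * measure lebesgue (\<Union>Q)) powr (1 / DIM('a))
        \<le> measure lebesgue (msum (\<Union>Pp) (\<Union>Qp)) powr (1 / DIM('a))"
      using BM2 unfolding BMp_def Pp_eq Qp_eq mp_def mq_def .
  qed
qed

lemma bm_base:
  fixes P Q :: "'a::euclidean_space set set"
  assumes P: "bfam P" and Q: "bfam Q" and X: "nd P = {X}" and Y: "nd Q = {Y}"
  shows "BMp (\<Union>P) (\<Union>Q)"
proof -
  have Xn: "X \<in> nd P" and Yn: "Y \<in> nd Q" using X Y by auto
  obtain a b where ab: "X = cbox a b" "\<forall>i\<in>Basis. a \<bullet> i < b \<bullet> i" using nd_cbox[OF P Xn] by blast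
  obtain c d where cd: "Y = cbox c d" "\<forall>i\<in>Basis. c \<bullet> i < d \<bullet> i" using nd_cbox[OF Q Yn] by blast
  have mX: "measure lebesgue (\<Union>P) = measure lebesgue X" using bfam_measure_nd[OF P] X by simp
  have mY: "measure lebesgue (\<Union>Q) = measure lebesgue Y" using bfam_measure_nd[OF Q] Y by simp
  have XP: "X \<in> P" and YQ: "Y \<in> Q" using Xn Yn unfolding nd_def by auto
  have "cbox (a + c) (b + d) \<subseteq> msum (\<Union>P) (\<Union>Q)"
  proof -
    have "cbox (a + c) (b + d) \<subseteq> msum X Y" unfolding ab cd by (rule cbox_sum_subset[OF ab(2) cd(2)])
    also have "\<dots> \<subseteq> msum (\<Union>P) (\<Union>Q)" using XP YQ by (intro msum_mono) auto
    finally show ?thesis .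
  qed
  then have le: "measure lebesgue (cbox (a + c) (b + d)) \<le> measure lebesgue (msum (\<Union>P) (\<Union>Q))"
    by (intro measure_mono_fmeasurable) (auto intro!: fmeasurableD lmeasurable_compact compact_msum bfam_compact P Q)
  have "measure lebesgue (cbox (a + c) (b + d)) powr (1/DIM('a)) \<le> measure lebesgue (msum (\<Union>P) (\<Union>Q)) powr (1/DIM('a))"
    using powr_mono2[OF _ _ le] by simp
  then show ?thesis
    unfolding BMp_def mX mY ab(1) cd(1) using box_bm[OF ab(2) cd(2)] by linarith
qed

lemma card_nd_pos:
  assumes "bfam P" "measure lebesgue (\<Union>P) > 0"
  shows "card (nd P) \<ge> 1"
proof -
  have "finite (nd P)" using bfamD(1)[OF assms(1)] unfolding nd_def by simp
  moreover have "nd P \<noteq> {}" by (rule nd_nonempty[OF assms])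
  ultimately show ?thesis by (simp add: Suc_le_eq card_gt_0_iff)
qed

lemma bm_boxes:
  fixes P Q :: "'a::euclidean_space set set"
  assumes "bfam P" "bfam Q" "measure lebesgue (\<Union>P) > 0" "measure lebesgue (\<Union>Q) > 0"
  shows "BMp (\<Union>P) (\<Union>Q)"
proof -
  have main: "\<forall>P Q :: 'a set set. card (nd P) + card (nd Q) = N \<longrightarrow> bfam P \<longrightarrow> bfam Q \<longrightarrow>
      measure lebesgue (\<Union>P) > 0 \<longrightarrow> measure lebesgue (\<Union>Q) > 0 \<longrightarrow> BMp (\<Union>P) (\<Union>Q)" for N
  proof (induction N rule: less_induct)
    case (less N)
    show ?case
    proof (intro allI impI)
      fix P Q :: "'a set set"
      assume N: "card (nd P) + card (nd Q) = N" and bP: "bfam P" and bQ: "bfam Q"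
        and mP: "measure lebesgue (\<Union>P) > 0" and mQ: "measure lebesgue (\<Union>Q) > 0"
      have IH: "BMp (\<Union>P') (\<Union>Q')" if "bfam P'" "bfam Q'" "measure lebesgue (\<Union>P') > 0"
        "measure lebesgue (\<Union>Q') > 0" "card (nd P') + card (nd Q') < card (nd P) + card (nd Q)"
        for P' Q' :: "'a set set"
        using less.IH[of "card (nd P') + card (nd Q')"] that N by blast
      show "BMp (\<Union>P) (\<Union>Q)"
      proof (cases "card (nd P) \<ge> 2")
        case True
        show ?thesis by (rule bm_step[OF bP bQ mP mQ True IH])
      next
        case F1: False
        show ?thesis
        proof (cases "card (nd Q) \<ge> 2")
          case True
          have "BMp (\<Union>Q) (\<Union>P)"
          proof (rule bm_step[OF bQ bP mQ mP True])
            fix P' Q' :: "'a set set"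
            assume "bfam P'" "bfam Q'" "measure lebesgue (\<Union>P') > 0" "measure lebesgue (\<Union>Q') > 0"
              "card (nd P') + card (nd Q') < card (nd Q) + card (nd P)"
            then show "BMp (\<Union>P') (\<Union>Q')" using IH by (simp add: add.commute)
          qed
          then show ?thesis by (simp add: BMp_commute)
        next
          case False
          have "card (nd P) = 1" using F1 card_nd_pos[OF bP mP] by linarith
          then obtain X where X: "nd P = {X}" by (rule card_1_singletonE)
          have "card (nd Q) = 1" using False card_nd_pos[OF bQ mQ] by linarith
          then obtain Y where Y: "nd Q = {Y}" by (rule card_1_singletonE)
          show ?thesis by (rule bm_base[OF bP bQ X Y])
        qed
      qed
    qed
  qed
  then show ?thesis using assms by blast
qed

lemma division_bfam: "p division_of S \<Longrightarrow> bfam p \<and> \<Union>p = S"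
  unfolding division_of_def bfam_def by blast

lemma approx_open:
  fixes U :: "'a::euclidean_space set"
  assumes U: "open U" "bounded U"
  obtains F where "\<And>j. bfam (F j)" "\<And>j. \<Union>(F j) \<subseteq> U"
    "(\<lambda>j. measure lebesgue (\<Union>(F j))) \<longlonglongrightarrow> measure lebesgue U"
proof (cases "U = {}")
  case True
  have "bfam ({} :: 'a set set)" unfolding bfam_def by simp
  then show ?thesis using that[of "\<lambda>j. {}"] True by simp
next
  case False
  obtain \<D> where D: "countable \<D>" "\<D> \<subseteq> Pow U" "\<And>X. X \<in> \<D> \<Longrightarrow> \<exists>a b. X = cbox a b" "\<Union>\<D> = U"
    using open_countable_Union_open_cbox[OF U(1)] by metis
  have Dne: "\<D> \<noteq> {}" using D(4) False by auto
  define E where "E = from_nat_into \<D>"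
  have rE: "range E = \<D>" unfolding E_def using D(1) Dne by simp
  define A where "A j = \<Union>(E ` {..j})" for j
  have Afin: "\<exists>p. p division_of A j" for j
  proof -
    have "finite (E ` {..j})" by simp
    moreover have "\<And>s. s \<in> E ` {..j} \<Longrightarrow> \<exists>a b. s = cbox a b" using D(3) rE by blast
    ultimately obtain p where "p division_of \<Union>(E ` {..j})" by (rule elementary_unions_intervals)
    then show ?thesis unfolding A_def by blast
  qed
  define F where "F j = (SOME p. p division_of A j)" for j
  have Fd: "F j division_of A j" for j unfolding F_def using Afin someI_ex by metis
  have bF: "bfam (F j)" and uF: "\<Union>(F j) = A j" for j using division_bfam[OF Fd[of j]] by auto
  have AU: "A j \<subseteq> U" for j unfolding A_def using D(2) rE by blast
  have Acpt: "compact (A j)" for j unfolding uF[symmetric] by (rule bfam_compact[OF bF])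
  have inc: "incseq A" unfolding A_def incseq_def by (auto; meson atMost_iff le_trans)
  have UA: "(\<Union>j. A j) = U"
  proof
    show "(\<Union>j. A j) \<subseteq> U" using AU by blast
    show "U \<subseteq> (\<Union>j. A j)"
    proof
      fix x assume "x \<in> U"
      then obtain X where "X \<in> \<D>" "x \<in> X" using D(4) by blast
      then obtain j where "E j = X" using rE by blast
      then have "x \<in> A j" unfolding A_def using \<open>x \<in> X\<close> by blast
      then show "x \<in> (\<Union>j. A j)" by blast
    qed
  qed
  have Ulm: "U \<in> lmeasurable" using lmeasurable_open U by blast
  have "(\<lambda>j. measure lebesgue (A j)) \<longlonglongrightarrow> measure lebesgue (\<Union>j. A j)"
  proof (rule Lim_measure_incseq)
    show "range A \<subseteq> sets lebesgue" using Acpt lmeasurable_compact by blast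
    show "incseq A" by (rule inc)
    show "emeasure lebesgue (\<Union>j. A j) \<noteq> \<infinity>" using Ulm unfolding UA fmeasurable_def by auto
  qed
  then show ?thesis using that[of F] bF uF AU UA by simp
qed

lemma bm_open:
  fixes U V :: "'a::euclidean_space set"
  assumes U: "open U" "bounded U" and V: "open V" "bounded V"
    and mU: "measure lebesgue U > 0" and mV: "measure lebesgue V > 0"
    and S: "msum U V \<subseteq> S" "S \<in> lmeasurable"
  shows "measure lebesgue U powr (1/DIM('a)) + measure lebesgue V powr (1/DIM('a)) \<le> measure lebesgue S powr (1/DIM('a))"
proof -
  obtain F where F: "\<And>j. bfam (F j)" "\<And>j. \<Union>(F j) \<subseteq> U"
    "(\<lambda>j. measure lebesgue (\<Union>(F j))) \<longlonglongrightarrow> measure lebesgue U"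
    using approx_open[OF U] by blast
  obtain G where G: "\<And>j. bfam (G j)" "\<And>j. \<Union>(G j) \<subseteq> V"
    "(\<lambda>j. measure lebesgue (\<Union>(G j))) \<longlonglongrightarrow> measure lebesgue V"
    using approx_open[OF V] by blast
  let ?e = "1 / real DIM('a)"
  have lim: "(\<lambda>j. measure lebesgue (\<Union>(F j)) powr ?e + measure lebesgue (\<Union>(G j)) powr ?e)
      \<longlonglongrightarrow> measure lebesgue U powr ?e + measure lebesgue V powr ?e"
    by (intro tendsto_add tendsto_powr F(3) G(3) tendsto_const) (use mU mV in auto)
  have ev1: "eventually (\<lambda>j. measure lebesgue (\<Union>(F j)) > 0) sequentially"
    using order_tendstoD(1)[OF F(3) mU] .
  have ev2: "eventually (\<lambda>j. measure lebesgue (\<Union>(G j)) > 0) sequentially"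
    using order_tendstoD(1)[OF G(3) mV] .
  have "eventually (\<lambda>j. measure lebesgue (\<Union>(F j)) powr ?e + measure lebesgue (\<Union>(G j)) powr ?e
      \<le> measure lebesgue S powr ?e) sequentially"
    using ev1 ev2
  proof eventually_elim
    case (elim j)
    have "BMp (\<Union>(F j)) (\<Union>(G j))" by (rule bm_boxes[OF F(1) G(1) elim])
    then have "measure lebesgue (\<Union>(F j)) powr ?e + measure lebesgue (\<Union>(G j)) powr ?e
        \<le> measure lebesgue (msum (\<Union>(F j)) (\<Union>(G j))) powr ?e" unfolding BMp_def .
    also have "\<dots> \<le> measure lebesgue S powr ?e"
    proof -
      have "msum (\<Union>(F j)) (\<Union>(G j)) \<subseteq> S" using msum_mono[OF F(2) G(2)] S(1) by blast
      then have "measure lebesgue (msum (\<Union>(F j)) (\<Union>(G j))) \<le> measure lebesgue S"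
        by (intro measure_mono_fmeasurable S(2)) (auto intro!: fmeasurableD lmeasurable_compact compact_msum bfam_compact F(1) G(1))
      then show ?thesis using powr_mono2[of ?e] by simp
    qed
    finally show ?case .
  qed
  then show ?thesis
    using lim by (intro LIMSEQ_le_const2[OF lim]) (simp add: eventually_sequentially)
qed

lemma final_alg:
  fixes n :: nat
  assumes n: "n > 0" and k: "\<kappa> > 0" and r: "r > 0" and mK: "mK > 0"
    and h: "mK powr (1/n) + (r^n * \<kappa>) powr (1/n) \<le> \<kappa> powr (1/n)"
  shows "mK \<le> (1 - r)^n * \<kappa>"
proof -
  have "(r^n * \<kappa>) powr (1/n) = (r^n) powr (1/n) * \<kappa> powr (1/n)"
    using r k by (simp add: powr_mult)
  also have "(r^n) powr (1/n) = r"
    using r n by (simp add: powr_realpow[symmetric] powr_powr)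
  finally have "mK powr (1/n) \<le> (1 - r) * \<kappa> powr (1/n)" using h by (simp add: algebra_simps)
  moreover have "mK powr (1/n) > 0" using mK by simp
  ultimately have r1: "1 - r > 0" using k by (smt (verit) mult_nonpos_nonneg powr_ge_zero)
  have le: "mK powr (1/n) \<le> (1 - r) * \<kappa> powr (1/n)" by fact
  have "(mK powr (1/n)) powr n \<le> ((1 - r) * \<kappa> powr (1/n)) powr n"
    using powr_mono2[OF _ _ le] by simp
  moreover have "(mK powr (1/n)) powr n = mK" using mK n by (simp add: powr_powr)
  moreover have "((1 - r) * \<kappa> powr (1/n)) powr n = (1 - r)^n * \<kappa>"
    using r1 k n by (simp add: powr_mult powr_powr powr_realpow)
  ultimately show ?thesis by simp
qed

lemma measure_cball_scale:
  assumes "r \<ge> 0"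
  shows "measure lebesgue (cball (c::'a::euclidean_space) r) = r ^ DIM('a) * measure lebesgue (cball (0::'a) 1)"
proof -
  have "measure lebesgue (cball c r) = measure lborel (cball c r)" by (simp add: measure_completion)
  also have "\<dots> = unit_ball_vol (DIM('a)) * r ^ DIM('a)" using content_cball[OF assms] .
  also have "measure lebesgue (cball (0::'a) 1) = unit_ball_vol (DIM('a))"
    using content_cball[of 1 "0::'a"] by (simp add: measure_completion)
  ultimately show ?thesis by simp
qed

theorem corollary2p4:
  fixes A :: "'a::euclidean_space set" and r :: real
  assumes "A \<noteq> {}"
    and "bounded A"
    and "outradius A \<le> 1"
    and "r \<ge> 0"
    and "measure lebesgue (cball (0::'a) r) = measure lebesgue (convex hull A)"
  shows "measure lebesgue (unit_ball_hull A) \<le> measure lebesgue (cball (0::'a) (1 - r))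
       \<and> measure lebesgue (cball (0::'a) (1 - r)) = (1 - r) ^ DIM('a) * measure lebesgue (cball (0::'a) 1)"
proof -
  define n where "n = DIM('a)"
  have n0: "n > 0" unfolding n_def by simp
  define \<kappa> where "\<kappa> = measure lebesgue (cball (0::'a) 1)"
  have "\<kappa> = unit_ball_vol (DIM('a))"
    unfolding \<kappa>_def using content_cball[of 1 "0::'a"] by (simp add: measure_completion)
  then have k0: "\<kappa> > 0" by simp
  define C where "C = convex hull A"
  define K where "K = unit_ball_hull A"
  have Cconv: "convex C" and Cbd: "bounded C" unfolding C_def using assms(2)
    by (simp_all add: convex_convex_hull bounded_convex_hull)
  have Clm: "C \<in> lmeasurable" by (rule measurable_convex[OF Cconv Cbd])
  have mC: "measure lebesgue C = r ^ n * \<kappa>"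
    using assms(5) measure_cball_scale[OF assms(4), of "0::'a"] unfolding C_def n_def \<kappa>_def by simp
  have r1: "r \<le> 1"
  proof (rule ccontr)
    assume "\<not> r \<le> 1"
    then have r1: "r > 1" by simp
    let ?R = "{\<rho>. \<exists>x. A \<subseteq> cball x \<rho>}"
    obtain e x0 where "A \<subseteq> cball x0 e" using assms(2) unfolding bounded_subset_cball by blast
    then have Rne: "?R \<noteq> {}" by blast
    have "Inf ?R < r" using assms(3) r1 unfolding outradius_def by simp
    then obtain \<rho> where "\<rho> \<in> ?R" "\<rho> < r" using cInf_lessD[OF Rne] by blast
    then obtain x where x: "A \<subseteq> cball x \<rho>" by blast
    have \<rho>0: "\<rho> \<ge> 0" using x assms(1) by (metis all_not_in_conv cball_empty not_le subset_empty)
    have "C \<subseteq> cball x \<rho>" unfolding C_def using x by (intro hull_minimal convex_cball)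
    then have "measure lebesgue C \<le> measure lebesgue (cball x \<rho>)"
      by (intro measure_mono_fmeasurable) (auto intro: fmeasurableD Clm)
    also have "\<dots> = \<rho> ^ n * \<kappa>" using measure_cball_scale[OF \<rho>0, of x] unfolding n_def \<kappa>_def .
    also have "\<dots> < r ^ n * \<kappa>" using \<rho>0 \<open>\<rho> < r\<close> n0 k0 by (intro mult_strict_right_mono power_strict_mono) auto
    finally show False using mC by simp
  qed
  have ball_eq: "measure lebesgue (cball (0::'a) (1 - r)) = (1 - r) ^ n * \<kappa>"
    using measure_cball_scale[of "1 - r" "0::'a"] r1 unfolding n_def \<kappa>_def by simp
  obtain a where aA: "a \<in> A" using assms(1) by blast
  have Ka: "K \<subseteq> cball a 1" unfolding K_def unit_ball_hull_def using aA by blast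
  have Kbd: "bounded K" using Ka bounded_cball bounded_subset by blast
  have Kconv: "convex K" unfolding K_def unit_ball_hull_def by (intro convex_INT convex_cball)
  have Klm: "K \<in> lmeasurable" by (rule measurable_convex[OF Kconv Kbd])
  have mK_le_k: "measure lebesgue K \<le> \<kappa>"
  proof -
    have "measure lebesgue K \<le> measure lebesgue (cball a 1)"
      using Ka by (intro measure_mono_fmeasurable) (auto intro: fmeasurableD Klm)
    also have "\<dots> = \<kappa>" using measure_cball_scale[of 1 a] unfolding \<kappa>_def by simp
    finally show ?thesis .
  qed
  have sub: "msum K (uminus ` C) \<subseteq> cball 0 1"
  proof
    fix z assume "z \<in> msum K (uminus ` C)"
    then obtain x y where z: "z = x + - y" "x \<in> K" "y \<in> C" unfolding msum_def by blast
    have "A \<subseteq> cball x 1" using z(2) unfolding K_def unit_ball_hull_def by (auto simp: dist_commute)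
    then have "C \<subseteq> cball x 1" unfolding C_def by (intro hull_minimal convex_cball)
    then have "dist x y \<le> 1" using z(3) by auto
    then show "z \<in> cball 0 1" using z(1) by (simp add: dist_norm norm_minus_commute)
  qed
  have main: "measure lebesgue K \<le> (1 - r) ^ n * \<kappa>"
  proof (cases "measure lebesgue K = 0")
    case True
    then show ?thesis using r1 k0 by simp
  next
    case Kne: False
    then have mKpos: "measure lebesgue K > 0" using measure_nonneg[of lebesgue K] by linarith
    show ?thesis
    proof (cases "r = 0")
      case True
      then show ?thesis using mK_le_k by simp
    next
      case False
      then have rpos: "r > 0" using assms(4) by simp
      define U where "U = interior K"
      define V where "V = interior (uminus ` C)"
      have NC: "convex (uminus ` C)" using Cconv by (rule convex_negations)
      have NB: "bounded (uminus ` C)" using bounded_linear_image[OF Cbd bounded_linear_minus[OF bounded_linear_ident]] by simp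
      have mNC: "measure lebesgue (uminus ` C) = measure lebesgue C"
      proof -
        have "(\<lambda>x. (-1) *\<^sub>R x + (0::'a)) = uminus" by (simp add: fun_eq_iff)
        then show ?thesis using measure_lebesgue_affine[of "-1" "0::'a" C] by simp
      qed
      have mU: "measure lebesgue U = measure lebesgue K"
        unfolding U_def by (rule measure_interior[OF Kbd negligible_convex_frontier[OF Kconv]])
      have mV: "measure lebesgue V = measure lebesgue C"
        unfolding V_def mNC[symmetric] by (rule measure_interior[OF NB negligible_convex_frontier[OF NC]])
      have "measure lebesgue U powr (1/DIM('a)) + measure lebesgue V powr (1/DIM('a))
          \<le> measure lebesgue (cball (0::'a) 1) powr (1/DIM('a))"
      proof (rule bm_open)
        show "open U" "open V" unfolding U_def V_def by simp_all
        show "bounded U" unfolding U_def using Kbd interior_subset bounded_subset by blast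
        show "bounded V" unfolding V_def using NB interior_subset bounded_subset by blast
        show "measure lebesgue U > 0" using mU mKpos by simp
        show "measure lebesgue V > 0" using mV mC rpos k0 by simp
        show "msum U V \<subseteq> cball 0 1"
          using msum_mono[OF interior_subset interior_subset, of K "uminus ` C"] sub unfolding U_def V_def by blast
        show "cball (0::'a) 1 \<in> lmeasurable" by simp
      qed
      then have "measure lebesgue K powr (1/n) + (r ^ n * \<kappa>) powr (1/n) \<le> \<kappa> powr (1/n)"
        using mU mV mC unfolding n_def \<kappa>_def by simp
      then show ?thesis by (rule final_alg[OF n0 k0 rpos mKpos])
    qed
  qed
  show ?thesis using main ball_eq unfolding K_def n_def \<kappa>_def by simp
qed

end
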